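(* Let $p,q$ be positive integers and $A\in\mathbb{R}^{(p+q)\times(p+q)}$. Let $J=\begin{bmatrix}E&0\\0&-I\end{bmatrix}$, where $E$ is the $p\times p$ matrix with all entries $1$ and $I$ is the $q\times q$ identity. If there exists $\lambda\ge0$ such that $A^\top JA-\lambda J$ is positive semidefinite, and the transposes of the first $p$ rows of $A$ belong to $L(p,q)$, then $A$ is a positive operator of $M(p,q)$, i.e. $A\,M(p,q)\subseteq M(p,q)$.
   Context: Let $e=(1,\dots,1)\in\mathbb{R}^p$. Identify $\mathbb{R}^p\times\mathbb{R}^q$ with $\mathbb{R}^{p+q}$ (column vectors) with the standard inner product $\langle\cdot,\cdot\rangle$ and Euclidean norm $\|\cdot\|$. Define \[L(p,q)=\{(x,u)\in\mathbb{R}^p\times\mathbb{R}^q:\ x\ge\|u\|e\}\] (componentwise inequality) and \[M(p,q)=\{(x,u)\in\mathbb{R}^p\times\mathbb{R}^q:\ \langle x,e\rangle\ge\|u\|,\ x\ge 0\}.\] A matrix $A$ is a positive operator of a cone $C$ if $AC\subseteq C$. *)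

theory Defs
  imports "HOL-Analysis.Analysis"
begin

text \<open>Vectors of R^(p+q) are indexed by the sum type 'p + 'q: index Inl i is the
 i-th x-coordinate, Inr j the j-th u-coordinate. p = CARD('p), q = CARD('q).\<close>

definition xpart :: "real ^ ('p::finite + 'q::finite) \<Rightarrow> real ^ 'p" where
  "xpart z = (\<chi> i. z $ Inl i)"

definition upart :: "real ^ ('p::finite + 'q::finite) \<Rightarrow> real ^ 'q" where
  "upart z = (\<chi> j. z $ Inr j)"

definition L_cone :: "(real ^ ('p::finite + 'q::finite)) set" where
  "L_cone = {z. \<forall>i. xpart z $ i \<ge> norm (upart z)}"

definition M_cone :: "(real ^ ('p::finite + 'q::finite)) set" where
  "M_cone = {z. (\<Sum>i\<in>UNIV. xpart z $ i) \<ge> norm (upart z) \<and> (\<forall>i. xpart z $ i \<ge> 0)}"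

definition Jmat :: "real ^ ('p::finite + 'q::finite) ^ ('p + 'q)" where
  "Jmat = (\<chi> a b. case (a, b) of
              (Inl _, Inl _) \<Rightarrow> 1
            | (Inr i, Inr j) \<Rightarrow> (if i = j then -1 else 0)
            | _ \<Rightarrow> 0)"

definition psd :: "real ^ 'n ^ 'n \<Rightarrow> bool" where
  "psd B \<longleftrightarrow> (\<forall>x. x \<bullet> (B *v x) \<ge> 0)"

definition positive_operator :: "real ^ 'n ^ 'n \<Rightarrow> (real ^ 'n) set \<Rightarrow> bool" where
  "positive_operator A C \<longleftrightarrow> (\<forall>z\<in>C. A *v z \<in> C)"

end

theory Submission imports Defs begin
lemma sum_plus: "(\<Sum>a\<in>(UNIV::('p::finite+'q::finite) set). f a) = (\<Sum>i\<in>UNIV. f (Inl i)) + (\<Sum>j\<in>UNIV. f (Inr j))"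
  by (simp add: UNIV_Plus_UNIV[symmetric] sum.Plus del: UNIV_Plus_UNIV)
lemma J_quad: "z \<bullet> (Jmat *v z) = (\<Sum>i\<in>UNIV. z$Inl i)^2 - (\<Sum>j\<in>UNIV. (z$Inr j)^2)"
  for z :: "real ^ ('p::finite + 'q::finite)"
proof -
  have e: "(\<Sum>k\<in>UNIV. (if j = k then -1 else 0) * z$Inr k) = - z$Inr j" for j
  proof -
    have "(\<lambda>k. (if j = k then -1 else 0) * z$Inr k) = (\<lambda>k. if j = k then - z$Inr k else 0)" by auto
    then show ?thesis by (simp only:) simp
  qed
  have "z \<bullet> (Jmat *v z) = (\<Sum>a\<in>UNIV. z$a * (\<Sum>b\<in>UNIV. Jmat$a$b * z$b))"
    by (simp add: inner_vec_def matrix_vector_mult_def)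
  also have "\<dots> = (\<Sum>i\<in>UNIV. z$Inl i * (\<Sum>k\<in>UNIV. z$Inl k)) - (\<Sum>j\<in>UNIV. (z$Inr j)^2)"
    by (simp add: sum_plus Jmat_def power2_eq_square e sum_negf)
  also have "\<dots> = (\<Sum>i\<in>UNIV. z$Inl i)^2 - (\<Sum>j\<in>UNIV. (z$Inr j)^2)"
    by (simp add: power2_eq_square sum_distrib_right)
  finally show ?thesis .
qed
lemma norm_u: "norm (upart z)^2 = (\<Sum>j\<in>UNIV. (z$Inr j)^2)"
  by (simp add: norm_vec_def L2_set_def upart_def sum_nonneg)
lemma quad_mult: "z \<bullet> ((transpose A ** B ** A) *v z) = (A *v z) \<bullet> (B *v (A *v z))"
  for A B :: "real^'n^'n"
proof -
  have "(transpose A ** B ** A) *v z = transpose A *v (B *v (A *v z))"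
    by (simp add: matrix_vector_mul_assoc matrix_mul_assoc)
  moreover have "z \<bullet> (transpose A *v w) = (A *v z) \<bullet> w" for w
    by (metis dot_lmul_matrix vector_transpose_matrix transpose_transpose)
  ultimately show ?thesis by simp
qed
lemma quad_sub: "z \<bullet> ((B - c *\<^sub>R C) *v z) = z \<bullet> (B *v z) - c * (z \<bullet> (C *v z))"
  for B C :: "real^'n^'n"
  by (simp add: matrix_vector_mult_diff_rdistrib inner_diff_right scaleR_matrix_vector_assoc[symmetric])

lemma inner_split: "a \<bullet> z = xpart a \<bullet> xpart z + upart a \<bullet> upart z"
  for a z :: "real ^ ('p::finite + 'q::finite)"
  by (simp add: inner_vec_def sum_plus xpart_def upart_def)

lemma row_pos:
  fixes a z :: "real ^ ('p::finite + 'q::finite)"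
  assumes a: "a \<in> L_cone" and z: "z \<in> M_cone"
  shows "a \<bullet> z \<ge> 0"
proof -
  let ?n = "norm (upart a)"
  have "xpart a \<bullet> xpart z = (\<Sum>k\<in>UNIV. xpart a $ k * xpart z $ k)" by (simp add: inner_vec_def)
  also have "\<dots> \<ge> (\<Sum>k\<in>UNIV. ?n * xpart z $ k)"
    using a z by (intro sum_mono mult_right_mono) (auto simp: L_cone_def M_cone_def)
  finally have 1: "xpart a \<bullet> xpart z \<ge> ?n * (\<Sum>k\<in>UNIV. xpart z $ k)" by (simp add: sum_distrib_left)
  have 2: "?n * (\<Sum>k\<in>UNIV. xpart z $ k) \<ge> ?n * norm (upart z)"
    using z by (intro mult_left_mono) (auto simp: M_cone_def)
  have 3: "upart a \<bullet> upart z \<ge> - (?n * norm (upart z))"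
    using Cauchy_Schwarz_ineq2[of "upart a" "upart z"] by linarith
  show ?thesis using 1 2 3 inner_split[of a z] by linarith
qed

theorem mainTheorem3:
  fixes A :: "real ^ ('p::finite + 'q::finite) ^ ('p + 'q)"
  assumes "\<exists>lam::real. lam \<ge> 0 \<and> psd (transpose A ** Jmat ** A - lam *\<^sub>R Jmat)"
    and "\<forall>i::'p. row (Inl i) A \<in> L_cone"
  shows "positive_operator A M_cone"
  unfolding positive_operator_def
proof
  fix z :: "real ^ ('p + 'q)"
  assume z: "z \<in> M_cone"
  obtain lam where lam: "lam \<ge> 0" "psd (transpose A ** Jmat ** A - lam *\<^sub>R Jmat)" using assms(1) by blast
  define y where "y = A *v z"
  have ypos: "y $ Inl i \<ge> 0" for i
  proof -
    have "y $ Inl i = row (Inl i) A \<bullet> z"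
      by (simp add: y_def matrix_vector_mult_def inner_vec_def row_def)
    then show ?thesis using row_pos[OF assms(2)[rule_format] z] by simp
  qed
  have sz: "(\<Sum>i\<in>UNIV. z$Inl i) \<ge> norm (upart z)" using z by (simp add: M_cone_def xpart_def)
  have zq: "z \<bullet> (Jmat *v z) \<ge> 0"
  proof -
    have "norm (upart z)^2 \<le> (\<Sum>i\<in>UNIV. z$Inl i)^2"
      using sz by (intro power_mono) auto
    then show ?thesis by (simp add: J_quad norm_u[symmetric])
  qed
  have "0 \<le> z \<bullet> ((transpose A ** Jmat ** A - lam *\<^sub>R Jmat) *v z)"
    using lam(2) by (simp add: psd_def)
  also have "\<dots> = y \<bullet> (Jmat *v y) - lam * (z \<bullet> (Jmat *v z))"
    by (simp add: quad_sub quad_mult y_def)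
  finally have "y \<bullet> (Jmat *v y) \<ge> 0" using lam(1) zq
    by (smt (verit) mult_nonneg_nonneg)
  then have "norm (upart y)^2 \<le> (\<Sum>i\<in>UNIV. y$Inl i)^2"
    by (simp add: J_quad norm_u[symmetric])
  moreover have "(\<Sum>i\<in>UNIV. y$Inl i) \<ge> 0" using ypos by (simp add: sum_nonneg)
  ultimately have "norm (upart y) \<le> (\<Sum>i\<in>UNIV. y$Inl i)"
    using power2_le_imp_le by blast
  then show "A *v z \<in> M_cone"
    using ypos by (simp add: M_cone_def xpart_def y_def[symmetric])
qed
end
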